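(* Let $\mathbf v=(v_1,\dots,v_m)$ and $\mathbf k=(k_1,\dots,k_m)$ be $m$-tuples of positive integers with $\mathbf v\ge\mathbf k$, and let $\mathbf w=(w_1,\dots,w_n)$ and $\boldsymbol\ell=(\ell_1,\dots,\ell_n)$ be $n$-tuples of positive integers with $\mathbf w\ge\boldsymbol\ell$. Let $t$ be a positive integer. Suppose $\mathcal D_1$ is a ${\rm GC}(\mathbf v,\mathbf k,t)$ with $b$ blocks and $\mathcal D_2$ is a ${\rm GC}(\mathbf w,\boldsymbol\ell,t)$ with $c$ blocks. Then there exists a ${\rm GC}(\mathrm{cat}(\mathbf v,\mathbf w),\mathrm{cat}(\mathbf k,\boldsymbol\ell),t)$ with $bc$ blocks.
   Context: $\mathrm{cat}(\mathbf a,\mathbf b)$ denotes concatenation of tuples. For tuples $\mathbf a,\mathbf b$ of positive integers of the same length $p$ with $\mathbf b\le\mathbf a$ entrywise and $t\le\sum_i b_i$: let $Y_1,\dots,Y_p$ be pairwise disjoint sets with $|Y_i|=a_i$; a block is a $p$-tuple $(B_1,\dots,B_p)$ with $B_i\subseteq Y_i$, $|B_i|=b_i$; a $p$-tuple of sets $(T_1,\dots,T_p)$ is $(\mathbf a,\mathbf b,t)$-admissible if $T_i\subseteq Y_i$, $|T_i|\le b_i$ for all $i$ and $\sum|T_i|=t$, and is contained in a block if $T_i\subseteq B_i$ for all $i$. A generalized covering design ${\rm GC}(\mathbf a,\mathbf b,t)$ is a finite family (repetitions allowed) of blocks containing every admissible tuple in at least one block. *)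

theory Defs
  imports Main
begin

text \<open>The ground set Y_i of coordinate i is taken
  to be the canonical set {0..<a_i}; since blocks and admissible tuples are
  tuples of sets indexed by coordinate, the Y_i are disjoint in effect.\<close>

definition is_block :: "nat list \<Rightarrow> nat list \<Rightarrow> nat set list \<Rightarrow> bool" where
  "is_block a b B \<longleftrightarrow> length B = length a \<and>
     (\<forall>i<length a. B ! i \<subseteq> {0..<a ! i} \<and> card (B ! i) = b ! i)"

definition admissible :: "nat list \<Rightarrow> nat list \<Rightarrow> nat \<Rightarrow> nat set list \<Rightarrow> bool" where
  "admissible a b t T \<longleftrightarrow> length T = length a \<and>
     (\<forall>i<length a. T ! i \<subseteq> {0..<a ! i} \<and> card (T ! i) \<le> b ! i) \<and>
     (\<Sum>i<length a. card (T ! i)) = t"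

definition contained_in :: "nat set list \<Rightarrow> nat set list \<Rightarrow> bool" where
  "contained_in T B \<longleftrightarrow> (\<forall>i<length T. T ! i \<subseteq> B ! i)"

text \<open>A generalized covering design GC(a,b,t): a family (list, so repetitions are
  allowed) of blocks covering every admissible tuple; the parameter conditions
  (same length, positive entries, b \<le> a, t \<le> sum b) are part of the notion.\<close>
definition is_GC :: "nat list \<Rightarrow> nat list \<Rightarrow> nat \<Rightarrow> nat set list list \<Rightarrow> bool" where
  "is_GC a b t D \<longleftrightarrow> length a = length b \<and>
     (\<forall>i<length a. 0 < b ! i \<and> b ! i \<le> a ! i) \<and> t \<le> sum_list b \<and>
     (\<forall>B\<in>set D. is_block a b B) \<and>
     (\<forall>T. admissible a b t T \<longrightarrow> (\<exists>B\<in>set D. contained_in T B))"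

end

theory Submission
  imports Defs
begin

lemma sum_card_list: "(\<Sum>i<length T. card (T ! i)) = sum_list (map card T)"
  by (simp add: sum_list_sum_nth atLeast0LessThan)

lemma admissible_alt: "admissible a b t T \<longleftrightarrow> length T = length a \<and>
     (\<forall>i<length a. T ! i \<subseteq> {0..<a ! i} \<and> card (T ! i) \<le> b ! i) \<and>
     sum_list (map card T) = t"
  unfolding admissible_def by (metis sum_card_list)

lemma sum_list_upd: "i < length T \<Longrightarrow>
  sum_list (map card (T[i := X])) + card (T ! i) = sum_list (map card T) + card X"
proof (induction T arbitrary: i)
  case Nil then show ?case by simp
next
  case (Cons a T) then show ?case by (cases i) auto
qed

lemma extend_aux:
  "\<forall>T. length T = length a \<and> length b = length a \<and>
     (\<forall>i<length a. T ! i \<subseteq> {0..<a ! i} \<and> card (T ! i) \<le> b ! i \<and> b ! i \<le> a ! i) \<and>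
     sum_list (map card T) \<le> t \<and> t \<le> sum_list b \<and> t - sum_list (map card T) = d
   \<longrightarrow> (\<exists>T'. admissible a b t T' \<and> contained_in T T')"
proof (induction d)
  case 0
  show ?case
  proof (intro allI impI)
    fix T assume H: "length T = length a \<and> length b = length a \<and>
     (\<forall>i<length a. T ! i \<subseteq> {0..<a ! i} \<and> card (T ! i) \<le> b ! i \<and> b ! i \<le> a ! i) \<and>
     sum_list (map card T) \<le> t \<and> t \<le> sum_list b \<and> t - sum_list (map card T) = 0"
    then have "admissible a b t T" unfolding admissible_alt by auto
    moreover have "contained_in T T" unfolding contained_in_def by auto
    ultimately show "\<exists>T'. admissible a b t T' \<and> contained_in T T'" by blast
  qed
next
  case (Suc d)
  show ?case
  proof (intro allI impI)
    fix T assume H: "length T = length a \<and> length b = length a \<and>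
     (\<forall>i<length a. T ! i \<subseteq> {0..<a ! i} \<and> card (T ! i) \<le> b ! i \<and> b ! i \<le> a ! i) \<and>
     sum_list (map card T) \<le> t \<and> t \<le> sum_list b \<and> t - sum_list (map card T) = Suc d"
    have "\<exists>i<length a. card (T ! i) < b ! i"
    proof (rule ccontr)
      assume "\<not> ?thesis"
      then have "\<forall>i<length a. b ! i \<le> card (T ! i)" by auto
      with H have "\<forall>i<length a. b ! i = card (T ! i)" by (meson le_antisym)
      with H have "b = map card T" by (simp add: list_eq_iff_nth_eq)
      with H have "t \<le> sum_list (map card T)" by simp
      then show False using H by linarith
    qed
    then obtain i where i: "i < length a" "card (T ! i) < b ! i" by blast
    have sub: "T ! i \<subseteq> {0..<a ! i}" and ba: "b ! i \<le> a ! i" using H i by auto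
    have "card (T ! i) < card {0..<a ! i}" using i(2) ba by simp
    then have "T ! i \<noteq> {0..<a ! i}" by auto
    with sub obtain x where x: "x \<in> {0..<a ! i}" "x \<notin> T ! i" by blast
    have fin: "finite (T ! i)" using sub finite_subset by blast
    define T1 where "T1 = T[i := insert x (T ! i)]"
    have c1: "card (insert x (T ! i)) = Suc (card (T ! i))" using fin x by simp
    have s1: "sum_list (map card T1) = Suc (sum_list (map card T))"
      using sum_list_upd[of i T "insert x (T ! i)"] c1 H i unfolding T1_def by simp
    have "length T1 = length a \<and> length b = length a \<and>
     (\<forall>j<length a. T1 ! j \<subseteq> {0..<a ! j} \<and> card (T1 ! j) \<le> b ! j \<and> b ! j \<le> a ! j) \<and>
     sum_list (map card T1) \<le> t \<and> t \<le> sum_list b \<and> t - sum_list (map card T1) = d"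
    proof (intro conjI allI impI)
      fix j assume j: "j < length a"
      show "T1 ! j \<subseteq> {0..<a ! j}"
        using H j x sub unfolding T1_def by (cases "j = i") auto
      show "card (T1 ! j) \<le> b ! j"
        using H j c1 i unfolding T1_def by (cases "j = i") auto
      show "b ! j \<le> a ! j" using H j by blast
    next
      show "length T1 = length a" using H unfolding T1_def by simp
      show "length b = length a" using H by simp
      show "sum_list (map card T1) \<le> t" using H s1 by linarith
      show "t \<le> sum_list b" using H by simp
      show "t - sum_list (map card T1) = d" using H s1 by linarith
    qed
    from Suc.IH[rule_format, OF this] obtain T' where T': "admissible a b t T'" "contained_in T1 T'" by blast
    have "contained_in T T'" unfolding contained_in_def
    proof (intro allI impI)
      fix j assume j: "j < length T"
      have "T ! j \<subseteq> T1 ! j" unfolding T1_def using j by (cases "j = i") auto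
      moreover have "T1 ! j \<subseteq> T' ! j" using T'(2) j unfolding contained_in_def T1_def by simp
      ultimately show "T ! j \<subseteq> T' ! j" by (rule order_trans)
    qed
    with T' show "\<exists>T'. admissible a b t T' \<and> contained_in T T'" by blast
  qed
qed

lemma GC_cover:
  assumes G: "is_GC a b t D" and lT: "length T = length a"
    and c: "\<forall>i<length a. T ! i \<subseteq> {0..<a ! i} \<and> card (T ! i) \<le> b ! i"
    and s: "sum_list (map card T) \<le> t"
  shows "\<exists>B\<in>set D. contained_in T B"
proof -
  have lb: "length b = length a" and ba: "\<forall>i<length a. b ! i \<le> a ! i"
    and tb: "t \<le> sum_list b"
    and cov: "\<forall>T. admissible a b t T \<longrightarrow> (\<exists>B\<in>set D. contained_in T B)"
  proof -
    have G': "length a = length b \<and>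
     (\<forall>i<length a. 0 < b ! i \<and> b ! i \<le> a ! i) \<and> t \<le> sum_list b \<and>
     (\<forall>B\<in>set D. is_block a b B) \<and>
     (\<forall>T. admissible a b t T \<longrightarrow> (\<exists>B\<in>set D. contained_in T B))"
      using G unfolding is_GC_def .
    then show "length b = length a" by (metis conjunct1)
    from G' show "\<forall>i<length a. b ! i \<le> a ! i" by blast
    from G' show "t \<le> sum_list b" by (metis conjunct1 conjunct2)
    from G' show "\<forall>T. admissible a b t T \<longrightarrow> (\<exists>B\<in>set D. contained_in T B)"
      by (metis conjunct2)
  qed
  have pre: "length T = length a \<and> length b = length a \<and>
     (\<forall>i<length a. T ! i \<subseteq> {0..<a ! i} \<and> card (T ! i) \<le> b ! i \<and> b ! i \<le> a ! i) \<and>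
     sum_list (map card T) \<le> t \<and> t \<le> sum_list b \<and> t - sum_list (map card T) = t - sum_list (map card T)"
    using lT lb c ba s tb by simp
  obtain T' where T': "admissible a b t T'" "contained_in T T'"
    using extend_aux[of a b t "t - sum_list (map card T)", rule_format, OF pre] by blast
  obtain B where B: "B \<in> set D" "contained_in T' B" using cov T'(1) by blast
  have lT': "length T' = length T" using T'(1) lT unfolding admissible_def by simp
  have "contained_in T B" unfolding contained_in_def
  proof (intro allI impI)
    fix i assume "i < length T"
    then have "T ! i \<subseteq> T' ! i" "T' ! i \<subseteq> B ! i"
      using T'(2) B(2) lT' unfolding contained_in_def by auto
    then show "T ! i \<subseteq> B ! i" by (rule order_trans)
  qed
  with B show ?thesis by blast
qed

lemma length_prod: "length (concat (map (\<lambda>x. map (f x) ys) xs)) = length xs * length ys"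
  by (induction xs) auto

theorem theorem6p1:
  fixes v k w l :: "nat list" and t b c :: nat
    and D1 D2 :: "nat set list list"
  assumes "length v = length k" and "\<forall>i<length v. 0 < k ! i \<and> k ! i \<le> v ! i"
    and "length w = length l" and "\<forall>i<length w. 0 < l ! i \<and> l ! i \<le> w ! i"
    and "0 < t"
    and "is_GC v k t D1" and "length D1 = b"
    and "is_GC w l t D2" and "length D2 = c"
  shows "\<exists>D. is_GC (v @ w) (k @ l) t D \<and> length D = b * c"
proof -
  define D where "D = concat (map (\<lambda>B1. map (\<lambda>B2. B1 @ B2) D2) D1)"
  have len: "length D = b * c" unfolding D_def using length_prod assms by metis
  have blocks: "\<forall>B\<in>set D. is_block (v @ w) (k @ l) B"
  proof
    fix B assume "B \<in> set D"
    then obtain B1 B2 where B: "B1 \<in> set D1" "B2 \<in> set D2" "B = B1 @ B2"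
      unfolding D_def by auto
    have bl1: "\<forall>B\<in>set D1. is_block v k B" using assms(6) unfolding is_GC_def by blast
    have bl2: "\<forall>B\<in>set D2. is_block w l B" using assms(8) unfolding is_GC_def by blast
    have "is_block v k B1" "is_block w l B2" using bl1 bl2 B by auto
    then show "is_block (v @ w) (k @ l) B" using B assms(1,3)
      unfolding is_block_def by (auto simp: nth_append)
  qed
  have cover: "\<forall>T. admissible (v @ w) (k @ l) t T \<longrightarrow> (\<exists>B\<in>set D. contained_in T B)"
  proof (intro allI impI)
    fix T assume T: "admissible (v @ w) (k @ l) t T"
    define T1 where "T1 = take (length v) T"
    define T2 where "T2 = drop (length v) T"
    have TT: "T = T1 @ T2" unfolding T1_def T2_def by simp
    have lT: "length T = length v + length w" using T unfolding admissible_def by simp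
    have l1: "length T1 = length v" and l2: "length T2 = length w" using lT unfolding T1_def T2_def by auto
    have sm: "sum_list (map card T1) + sum_list (map card T2) = t"
      using T TT unfolding admissible_alt by simp
    have c1: "\<forall>i<length v. T1 ! i \<subseteq> {0..<v ! i} \<and> card (T1 ! i) \<le> k ! i"
    proof (intro allI impI)
      fix i assume i: "i < length v"
      have "i < length (v @ w)" using i by simp
      then have "T ! i \<subseteq> {0..<(v @ w) ! i} \<and>
          card (T ! i) \<le> (k @ l) ! i"
        using T unfolding admissible_def by blast
      then show "T1 ! i \<subseteq> {0..<v ! i} \<and> card (T1 ! i) \<le> k ! i"
        using TT l1 assms(1) i by (simp add: nth_append)
    qed
    have c2: "\<forall>i<length w. T2 ! i \<subseteq> {0..<w ! i} \<and> card (T2 ! i) \<le> l ! i"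
    proof (intro allI impI)
      fix i assume i: "i < length w"
      have "length v + i < length (v @ w)" using i by simp
      then have "T ! (length v + i) \<subseteq> {0..<(v @ w) ! (length v + i)} \<and>
          card (T ! (length v + i)) \<le> (k @ l) ! (length v + i)"
        using T unfolding admissible_def by blast
      then show "T2 ! i \<subseteq> {0..<w ! i} \<and> card (T2 ! i) \<le> l ! i"
        using TT l1 assms(1) by (simp add: nth_append)
    qed
    obtain B1 where B1: "B1 \<in> set D1" "contained_in T1 B1"
      using GC_cover[OF assms(6) l1 c1] sm by fastforce
    obtain B2 where B2: "B2 \<in> set D2" "contained_in T2 B2"
      using GC_cover[OF assms(8) l2 c2] sm by fastforce
    have bl1: "\<forall>B\<in>set D1. is_block v k B" using assms(6) unfolding is_GC_def by blast
    have lB1: "length B1 = length v" using B1 bl1 unfolding is_block_def by auto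
    have "B1 @ B2 \<in> set D" using B1 B2 unfolding D_def by auto
    moreover have "contained_in T (B1 @ B2)" using B1(2) B2(2) TT l1 lB1
      unfolding contained_in_def by (auto simp: nth_append)
    ultimately show "\<exists>B\<in>set D. contained_in T B" by blast
  qed
  have tk: "t \<le> sum_list k" using assms(6) unfolding is_GC_def by blast
  have pos: "\<forall>i<length (v @ w). 0 < (k @ l) ! i \<and> (k @ l) ! i \<le> (v @ w) ! i"
    using assms(1,2,4) by (auto simp: nth_append)
  have "is_GC (v @ w) (k @ l) t D"
    unfolding is_GC_def
    using blocks cover pos tk assms(1,3) by simp
  with len show ?thesis by blast
qed

end
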